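(* Let $q\ge 2$ and $k\ge 1$ be fixed integers and let $\Gamma$ be a finite, non-trivial constraint language consisting of $k$-ary relations over $[q]=\{0,1,\dots,q-1\}$. Then, for deciding satisfiability of instances of $\mathsf{CSP}(\Gamma)$ on $n$ variables presented as a single-pass stream of constraints: (a) there exists a deterministic single-pass streaming algorithm using $O_{q,k}(\mathsf{NRD}_n(\Gamma)\log n)$ bits of space; and (b) no randomized single-pass streaming algorithm (succeeding with probability at least $2/3$ on every input) uses $o(\mathsf{NRD}_n(\Gamma))$ bits of space.
   Context: An instance of $\mathsf{CSP}(\Gamma)$ on variables $x_1,\dots,x_n$ taking values in $[q]$ is a finite set of constraints, each of the form $\{R,(x_{i_1}+\lambda_{i_1},\dots,x_{i_k}+\lambda_{i_k})\}$ with $R\in\Gamma$, $(i_1,\dots,i_k)\in[n]^k$ and shifts $\lambda_{i_j}\in[q]$; an assignment $a\in[q]^n$ satisfies it if $(a_{i_1}+\lambda_{i_1},\dots,a_{i_k}+\lambda_{i_k})\in R$, with arithmetic modulo $q$. $\mathrm{Sat}(I)$ is the set of assignments satisfying every constraint of $I$; $I$ is satisfiable if $\mathrm{Sat}(I)\neq\emptyset$. A constraint $C\in I$ is redundant if $\mathrm{Sat}(I\setminus\{C\})=\mathrm{Sat}(I)$; $I$ is non-redundant if none of its constraints is redundant. $\mathsf{NRD}_n(\Gamma)$ is the maximum number of constraints in a non-redundant instance of $\mathsf{CSP}(\Gamma)$ on $n$ variables. $\Gamma$ is non-trivial if every relation in $\Gamma$ is non-empty and at least one relation in $\Gamma$ is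 a proper subset of $[q]^k$. In the streaming model the constraints arrive one at a time and at the end the algorithm must output whether the instance is satisfiable; a deterministic algorithm must always be correct, a randomized one correct with probability at least $2/3$ on every input. Hidden constants may depend on $q$, $k$ and $\Gamma$. *)

theory Defs
  imports "HOL-Probability.Probability_Mass_Function" "HOL-Library.Landau_Symbols"
begin

text \<open>A constraint is a triple (R, idx, sh): relation R, variable indices idx
  (length k) and shifts sh (length k), where the shift attached to a position
  is the shift of the variable at that position (so equal variables get equal
  shifts).\<close>

type_synonym constr = "nat list set \<times> nat list \<times> nat list"

definition is_relation :: "nat \<Rightarrow> nat \<Rightarrow> nat list set \<Rightarrow> bool" where
  "is_relation q k R \<longleftrightarrow> (\<forall>t\<in>R. length t = k \<and> (\<forall>x\<in>set t. x < q))"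

definition full_tuples :: "nat \<Rightarrow> nat \<Rightarrow> nat list set" where
  "full_tuples q k = {t. length t = k \<and> (\<forall>x\<in>set t. x < q)}"

definition nontrivial_lang :: "nat \<Rightarrow> nat \<Rightarrow> nat list set set \<Rightarrow> bool" where
  "nontrivial_lang q k \<Gamma> \<longleftrightarrow> (\<forall>R\<in>\<Gamma>. R \<noteq> {}) \<and> (\<exists>R\<in>\<Gamma>. R \<subset> full_tuples q k)"

definition valid_constr :: "nat \<Rightarrow> nat \<Rightarrow> nat list set set \<Rightarrow> nat \<Rightarrow> constr \<Rightarrow> bool" where
  "valid_constr q k \<Gamma> n C \<longleftrightarrow> (case C of (R, idx, sh) \<Rightarrow>
     R \<in> \<Gamma> \<and> length idx = k \<and> length sh = k \<and>
     (\<forall>i\<in>set idx. i < n) \<and> (\<forall>l\<in>set sh. l < q) \<and>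
     (\<forall>j<k. \<forall>j'<k. idx ! j = idx ! j' \<longrightarrow> sh ! j = sh ! j'))"

definition is_instance :: "nat \<Rightarrow> nat \<Rightarrow> nat list set set \<Rightarrow> nat \<Rightarrow> constr set \<Rightarrow> bool" where
  "is_instance q k \<Gamma> n I \<longleftrightarrow> finite I \<and> (\<forall>C\<in>I. valid_constr q k \<Gamma> n C)"

definition assignments :: "nat \<Rightarrow> nat \<Rightarrow> nat list set" where
  "assignments q n = {a. length a = n \<and> (\<forall>x\<in>set a. x < q)}"

definition sat_constr :: "nat \<Rightarrow> constr \<Rightarrow> nat list \<Rightarrow> bool" where
  "sat_constr q C a \<longleftrightarrow> (case C of (R, idx, sh) \<Rightarrow>
     map (\<lambda>(i, l). (a ! i + l) mod q) (zip idx sh) \<in> R)"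

definition Sat :: "nat \<Rightarrow> nat \<Rightarrow> constr set \<Rightarrow> nat list set" where
  "Sat q n I = {a \<in> assignments q n. \<forall>C\<in>I. sat_constr q C a}"

definition non_redundant :: "nat \<Rightarrow> nat \<Rightarrow> constr set \<Rightarrow> bool" where
  "non_redundant q n I \<longleftrightarrow> (\<forall>C\<in>I. Sat q n (I - {C}) \<noteq> Sat q n I)"

definition NRD :: "nat \<Rightarrow> nat \<Rightarrow> nat list set set \<Rightarrow> nat \<Rightarrow> nat" where
  "NRD q k \<Gamma> n = Max {card I | I. is_instance q k \<Gamma> n I \<and> non_redundant q n I}"

definition valid_stream :: "nat \<Rightarrow> nat \<Rightarrow> nat list set set \<Rightarrow> nat \<Rightarrow> constr list \<Rightarrow> bool" where
  "valid_stream q k \<Gamma> n xs \<longleftrightarrow> distinct xs \<and> (\<forall>C\<in>set xs. valid_constr q k \<Gamma> n C)"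

text \<open>Deterministic single-pass streaming algorithm with memory states S
  (space = log2 |S| bits), initial state, transition and output function.\<close>
definition det_run :: "nat \<Rightarrow> (nat \<Rightarrow> constr \<Rightarrow> nat) \<Rightarrow> constr list \<Rightarrow> nat" where
  "det_run s0 \<delta> xs = fold (\<lambda>c s. \<delta> s c) xs s0"

definition det_stream_alg ::
  "nat \<Rightarrow> nat \<Rightarrow> nat list set set \<Rightarrow> nat \<Rightarrow> real \<Rightarrow>
   nat set \<Rightarrow> nat \<Rightarrow> (nat \<Rightarrow> constr \<Rightarrow> nat) \<Rightarrow> (nat \<Rightarrow> bool) \<Rightarrow> bool" where
  "det_stream_alg q k \<Gamma> n b S s0 \<delta> out \<longleftrightarrow>
     finite S \<and> real (card S) \<le> 2 powr b \<and> s0 \<in> S \<and>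
     (\<forall>s\<in>S. \<forall>C. valid_constr q k \<Gamma> n C \<longrightarrow> \<delta> s C \<in> S) \<and>
     (\<forall>xs. valid_stream q k \<Gamma> n xs \<longrightarrow>
        out (det_run s0 \<delta> xs) = (Sat q n (set xs) \<noteq> {}))"

text \<open>Randomized single-pass streaming algorithm: random initial state,
  randomized transitions, randomized output; all states lie in S
  (space = log2 |S| bits); correct with probability at least 2/3 on every stream.\<close>
definition rand_run :: "nat pmf \<Rightarrow> (nat \<Rightarrow> constr \<Rightarrow> nat pmf) \<Rightarrow> constr list \<Rightarrow> nat pmf" where
  "rand_run s0 \<delta> xs = fold (\<lambda>c p. bind_pmf p (\<lambda>s. \<delta> s c)) xs s0"

definition rand_stream_alg ::
  "nat \<Rightarrow> nat \<Rightarrow> nat list set set \<Rightarrow> nat \<Rightarrow> real \<Rightarrow>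
   nat set \<Rightarrow> nat pmf \<Rightarrow> (nat \<Rightarrow> constr \<Rightarrow> nat pmf) \<Rightarrow> (nat \<Rightarrow> bool pmf) \<Rightarrow> bool" where
  "rand_stream_alg q k \<Gamma> n b S s0 \<delta> out \<longleftrightarrow>
     finite S \<and> real (card S) \<le> 2 powr b \<and> set_pmf s0 \<subseteq> S \<and>
     (\<forall>s\<in>S. \<forall>C. valid_constr q k \<Gamma> n C \<longrightarrow> set_pmf (\<delta> s C) \<subseteq> S) \<and>
     (\<forall>xs. valid_stream q k \<Gamma> n xs \<longrightarrow>
        measure_pmf.prob (bind_pmf (rand_run s0 \<delta> xs) out)
          {Sat q n (set xs) \<noteq> {}} \<ge> 2/3)"

end

theory Submission
  imports Defs
begin


definition Lt :: "'a set \<Rightarrow> nat \<Rightarrow> 'a list set" where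
  "Lt S t = {xs. set xs \<subseteq> S \<and> length xs = t}"

lemma sum_Lt_Suc:
  assumes "finite S"
  shows "(\<Sum>xs\<in>Lt S (Suc t). F xs) = (\<Sum>x\<in>S. \<Sum>xs\<in>Lt S t. F (x # xs))"
proof -
  have fin: "finite (Lt S t)" unfolding Lt_def using assms by (simp add: finite_lists_length_eq)
  have "Lt S (Suc t) = (\<lambda>(xs, n). n#xs) ` (Lt S t \<times> S)"
    unfolding Lt_def by (rule lists_length_Suc_eq)
  moreover have "sum F ((\<lambda>(xs, n). n#xs) ` (Lt S t \<times> S)) = sum (F \<circ> (\<lambda>(xs, n). n#xs)) (Lt S t \<times> S)"
    by (rule sum.reindex) (auto simp: inj_on_def)
  ultimately have "(\<Sum>xs\<in>Lt S (Suc t). F xs) = (\<Sum>p\<in>Lt S t \<times> S. F (snd p # fst p))"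
    by (simp add: case_prod_beta)
  also have "\<dots> = (\<Sum>xs\<in>Lt S t. \<Sum>x\<in>S. F (x # xs))"
    by (simp add: sum.cartesian_product case_prod_beta)
  also have "\<dots> = (\<Sum>x\<in>S. \<Sum>xs\<in>Lt S t. F (x # xs))"
    by (rule sum.swap)
  finally show ?thesis .
qed

lemma Lt_0: "Lt S 0 = {[]}" by (auto simp: Lt_def)

lemma moments:
  fixes \<mu> g :: "'a \<Rightarrow> real"
  assumes fin: "finite S" and mu1: "(\<Sum>x\<in>S. \<mu> x) = 1" and mu0: "\<And>x. x \<in> S \<Longrightarrow> \<mu> x \<ge> 0"
    and g0: "(\<Sum>x\<in>S. \<mu> x * g x) = 0" and g1: "\<And>x. x \<in> S \<Longrightarrow> (g x)^2 \<le> 1"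
  shows "(\<Sum>xs\<in>Lt S t. prod_list (map \<mu> xs)) = 1
       \<and> (\<Sum>xs\<in>Lt S t. prod_list (map \<mu> xs) * sum_list (map g xs)) = 0
       \<and> (\<Sum>xs\<in>Lt S t. prod_list (map \<mu> xs) * (sum_list (map g xs))^2) \<le> real t"
proof (induction t)
  case 0
  then show ?case by (simp add: Lt_0)
next
  case (Suc t)
  let ?W = "\<lambda>xs. prod_list (map \<mu> xs)" and ?G = "\<lambda>xs. sum_list (map g xs)"
  have IH1: "(\<Sum>xs\<in>Lt S t. ?W xs) = 1" and IH2: "(\<Sum>xs\<in>Lt S t. ?W xs * ?G xs) = 0"
    and IH3: "(\<Sum>xs\<in>Lt S t. ?W xs * (?G xs)^2) \<le> real t" using Suc by auto
  have A: "(\<Sum>xs\<in>Lt S (Suc t). ?W xs) = 1"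
    by (simp add: sum_Lt_Suc[OF fin] sum_distrib_left[symmetric] IH1 mu1)
  have B: "(\<Sum>xs\<in>Lt S (Suc t). ?W xs * ?G xs) = 0"
  proof -
    have "(\<Sum>xs\<in>Lt S (Suc t). ?W xs * ?G xs)
        = (\<Sum>x\<in>S. \<Sum>xs\<in>Lt S t. (\<mu> x * g x) * ?W xs + \<mu> x * (?W xs * ?G xs))"
      by (simp add: sum_Lt_Suc[OF fin] algebra_simps)
    also have "\<dots> = (\<Sum>x\<in>S. (\<mu> x * g x) * (\<Sum>xs\<in>Lt S t. ?W xs) + \<mu> x * (\<Sum>xs\<in>Lt S t. ?W xs * ?G xs))"
      by (simp add: sum.distrib sum_distrib_left)
    also have "\<dots> = 0" using IH1 IH2 g0 by simp
    finally show ?thesis .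
  qed
  have C: "(\<Sum>xs\<in>Lt S (Suc t). ?W xs * (?G xs)^2) \<le> real (Suc t)"
  proof -
    have "(\<Sum>xs\<in>Lt S (Suc t). ?W xs * (?G xs)^2)
        = (\<Sum>x\<in>S. \<Sum>xs\<in>Lt S t. (\<mu> x * (g x)^2) * ?W xs + (2 * \<mu> x * g x) * (?W xs * ?G xs) + \<mu> x * (?W xs * (?G xs)^2))"
      by (simp add: sum_Lt_Suc[OF fin] algebra_simps power2_eq_square)
    also have "\<dots> = (\<Sum>x\<in>S. (\<mu> x * (g x)^2) * (\<Sum>xs\<in>Lt S t. ?W xs) + (2 * \<mu> x * g x) * (\<Sum>xs\<in>Lt S t. ?W xs * ?G xs) + \<mu> x * (\<Sum>xs\<in>Lt S t. ?W xs * (?G xs)^2))"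
      by (simp add: sum.distrib sum_distrib_left)
    also have "\<dots> = (\<Sum>x\<in>S. \<mu> x * (g x)^2) + (\<Sum>x\<in>S. \<mu> x) * (\<Sum>xs\<in>Lt S t. ?W xs * (?G xs)^2)"
      using IH1 IH2 by (simp add: sum.distrib sum_distrib_right)
    also have "\<dots> \<le> 1 + real t"
    proof -
      have "(\<Sum>x\<in>S. \<mu> x * (g x)^2) \<le> (\<Sum>x\<in>S. \<mu> x * 1)"
        by (rule sum_mono) (simp add: mu0 g1 mult_left_le)
      then show ?thesis using mu1 IH3 by simp
    qed
    finally show ?thesis by simp
  qed
  show ?case using A B C by blast
qed

lemma sum_list_map_const_sub:
  "sum_list (map (\<lambda>x. f x - c) xs) = sum_list (map f xs) - real (length xs) * (c::real)"
  by (induction xs) (auto simp: algebra_simps)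

lemma misclass_bound:
  fixes \<mu> g :: "'a \<Rightarrow> real" and t :: nat
  assumes fin: "finite S" and mu1: "(\<Sum>x\<in>S. \<mu> x) = 1" and mu0: "\<And>x. x \<in> S \<Longrightarrow> \<mu> x \<ge> 0"
    and g01: "\<And>x. x \<in> S \<Longrightarrow> 0 \<le> g x \<and> g x \<le> 1" and t: "t > 0"
    and P: "\<And>xs. xs \<in> Lt S t \<Longrightarrow> P xs \<Longrightarrow> \<bar>sum_list (map g xs) - real t * (\<Sum>x\<in>S. \<mu> x * g x)\<bar> \<ge> real t / 6"
  shows "(\<Sum>xs\<in>Lt S t. prod_list (map \<mu> xs) * (if P xs then 1 else 0)) \<le> 36 / real t"
proof -
  define m where "m = (\<Sum>x\<in>S. \<mu> x * g x)"
  have m0: "m \<ge> 0" unfolding m_def by (rule sum_nonneg) (simp add: mu0 g01)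
  have "m \<le> (\<Sum>x\<in>S. \<mu> x * 1)" unfolding m_def by (rule sum_mono) (simp add: mu0 g01 mult_left_le)
  hence m1: "m \<le> 1" using mu1 by simp
  define g' where "g' x = g x - m" for x
  have g'0: "(\<Sum>x\<in>S. \<mu> x * g' x) = 0"
    unfolding g'_def by (simp add: right_diff_distrib sum_subtractf sum_distrib_right[symmetric] mu1 m_def)
  have g'1: "(g' x)^2 \<le> 1" if "x \<in> S" for x
  proof -
    have "\<bar>g' x\<bar> \<le> 1" using g01[OF that] m0 m1 unfolding g'_def by auto
    hence "\<bar>g' x\<bar>^2 \<le> 1^2" by (rule power_mono) simp
    thus ?thesis by simp
  qed
  have mom: "(\<Sum>xs\<in>Lt S t. prod_list (map \<mu> xs)) = 1
       \<and> (\<Sum>xs\<in>Lt S t. prod_list (map \<mu> xs) * (sum_list (map g' xs))^2) \<le> real t"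
    using moments[OF fin mu1 mu0 g'0 g'1] by blast
  have Wnn: "prod_list (map \<mu> xs) \<ge> 0" if "xs \<in> Lt S t" for xs
  proof -
    have S: "set xs \<subseteq> S" using that unfolding Lt_def by simp
    show ?thesis by (rule prod_list_nonneg) (use S mu0 in auto)
  qed
  have ind: "(if P xs then 1 else 0) \<le> 36 / (real t)^2 * (sum_list (map g' xs))^2" if xs: "xs \<in> Lt S t" for xs
  proof (cases "P xs")
    case True
    have len: "length xs = t" using xs unfolding Lt_def by auto
    have "sum_list (map g' xs) = sum_list (map g xs) - real t * m"
      unfolding g'_def using sum_list_map_const_sub[of g m xs] len by simp
    hence "\<bar>sum_list (map g' xs)\<bar> \<ge> real t / 6" using P[OF xs True] unfolding m_def by simp
    hence "(real t / 6)^2 \<le> \<bar>sum_list (map g' xs)\<bar>^2" by (rule power_mono) simp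
    hence "(real t / 6)^2 \<le> (sum_list (map g' xs))^2" by simp
    hence "(real t)^2 \<le> 36 * (sum_list (map g' xs))^2" by (simp add: power_divide)
    hence "1 \<le> 36 / (real t)^2 * (sum_list (map g' xs))^2" using t by (simp add: field_simps)
    then show ?thesis using True by simp
  qed simp
  have "(\<Sum>xs\<in>Lt S t. prod_list (map \<mu> xs) * (if P xs then 1 else 0))
      \<le> (\<Sum>xs\<in>Lt S t. prod_list (map \<mu> xs) * (36 / (real t)^2 * (sum_list (map g' xs))^2))"
    by (rule sum_mono, rule mult_left_mono[OF ind Wnn])
  also have "\<dots> = 36 / (real t)^2 * (\<Sum>xs\<in>Lt S t. prod_list (map \<mu> xs) * (sum_list (map g' xs))^2)"
    unfolding sum_distrib_left by (rule sum.cong) (simp_all add: ac_simps)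
  also have "\<dots> \<le> 36 / (real t)^2 * real t"
    using mom by (intro mult_left_mono) auto
  also have "\<dots> = 36 / real t" using t by (simp add: power2_eq_square)
  finally show ?thesis .
qed

lemma exists_below_avg:
  fixes w f :: "'b \<Rightarrow> real"
  assumes "finite A" "(\<Sum>x\<in>A. w x) = 1" "\<And>x. x \<in> A \<Longrightarrow> w x \<ge> 0"
    "(\<Sum>x\<in>A. w x * f x) \<le> c"
  shows "\<exists>x\<in>A. f x \<le> c"
proof (rule ccontr)
  assume "\<not> ?thesis"
  hence gt: "\<And>x. x \<in> A \<Longrightarrow> f x > c" by auto
  have "\<exists>x\<in>A. w x \<noteq> 0"
  proof (rule ccontr)
    assume "\<not> (\<exists>x\<in>A. w x \<noteq> 0)"
    hence "(\<Sum>x\<in>A. w x) = 0" by simp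
    thus False using assms(2) by simp
  qed
  then obtain x0 where x0: "x0 \<in> A" "w x0 \<noteq> 0" by blast
  have "(\<Sum>x\<in>A. w x * c) < (\<Sum>x\<in>A. w x * f x)"
  proof (rule sum_strict_mono_ex1[OF assms(1)])
    show "\<forall>x\<in>A. w x * c \<le> w x * f x" using gt assms(3) by (auto intro: mult_left_mono[OF less_imp_le])
    show "\<exists>a\<in>A. w a * c < w a * f a" using x0 gt[OF x0(1)] assms(3)[OF x0(1)] by (intro bexI[of _ x0]) auto
  qed
  also have "(\<Sum>x\<in>A. w x * c) = c" using assms(2) by (simp add: sum_distrib_right[symmetric])
  finally show False using assms(4) by simp
qed

lemma card_small_subsets:
  assumes "finite Q"
  shows "real (card {E. E \<subseteq> Q \<and> card E \<le> r}) \<le> 4^r * (5/4)^(card Q)"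
proof -
  have eq: "{E. E \<subseteq> Q \<and> card E \<le> r} = (\<Union>i\<in>{..r}. {E. E \<subseteq> Q \<and> card E = i})" by auto
  have "card {E. E \<subseteq> Q \<and> card E \<le> r} \<le> (\<Sum>i\<in>{..r}. card {E. E \<subseteq> Q \<and> card E = i})"
    unfolding eq by (rule card_UN_le) simp
  also have "\<dots> = (\<Sum>i\<in>{..r}. card Q choose i)" by (rule sum.cong) (simp_all only: n_subsets[OF assms])
  finally have "real (card {E. E \<subseteq> Q \<and> card E \<le> r}) \<le> (\<Sum>i\<in>{..r}. real (card Q choose i))"
    by (simp only: of_nat_sum[symmetric] of_nat_le_iff)
  also have "\<dots> \<le> (\<Sum>i\<in>{..r}. real (card Q choose i) * (4^r * (1/4)^i))"
  proof (rule sum_mono)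
    fix i assume "i \<in> {..r}"
    hence "(4::real)^i \<le> 4^r" by (intro power_increasing) auto
    hence "1 \<le> (4::real)^r * (1/4)^i" by (simp add: power_one_over field_simps)
    thus "real (card Q choose i) \<le> real (card Q choose i) * (4^r * (1/4)^i)"
      by (simp add: mult_le_cancel_left1)
  qed
  also have "\<dots> = 4^r * (\<Sum>i\<in>{..r}. real (card Q choose i) * (1/4)^i)"
    by (simp add: sum_distrib_left algebra_simps)
  also have "(\<Sum>i\<in>{..r}. real (card Q choose i) * (1/4)^i) \<le> (\<Sum>i\<in>{..card Q}. real (card Q choose i) * (1/4)^i)"
  proof (cases "r \<le> card Q")
    case True
    then show ?thesis by (intro sum_mono2) auto
  next
    case False
    hence split: "{..r} = {..card Q} \<union> {card Q<..r}" by auto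
    have "(\<Sum>i\<in>{..r}. real (card Q choose i) * (1/4)^i) = (\<Sum>i\<in>{..card Q}. real (card Q choose i) * (1/4)^i) + (\<Sum>i\<in>{card Q<..r}. real (card Q choose i) * (1/4)^i)"
      unfolding split by (rule sum.union_disjoint) auto
    moreover have "(\<Sum>i\<in>{card Q<..r}. real (card Q choose i) * (1/4)^i) = 0" by (intro sum.neutral) auto
    ultimately show ?thesis by simp
  qed
  also have "(\<Sum>i\<in>{..card Q}. real (card Q choose i) * (1/4)^i) = (1/4 + 1)^(card Q)"
    using binomial_ring[of "1/4::real" 1 "card Q"] by simp
  finally show ?thesis by (simp add: mult_left_mono)
qed

lemma comm_lb:
  fixes \<mu> :: "'c set \<Rightarrow> 'a \<Rightarrow> real" and g :: "'c \<Rightarrow> 'a \<Rightarrow> real"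
  assumes finS: "finite S" and finQ: "finite Q"
    and mu: "\<And>T. T \<subseteq> Q \<Longrightarrow> (\<Sum>x\<in>S. \<mu> T x) = 1 \<and> (\<forall>x\<in>S. \<mu> T x \<ge> 0)"
    and g: "\<And>C x. C \<in> Q \<Longrightarrow> x \<in> S \<Longrightarrow> 0 \<le> g C x \<and> g C x \<le> 1"
    and hi: "\<And>T C. T \<subseteq> Q \<Longrightarrow> C \<in> Q \<Longrightarrow> C \<notin> T \<Longrightarrow> (\<Sum>x\<in>S. \<mu> T x * g C x) \<ge> 2/3"
    and lo: "\<And>T C. T \<subseteq> Q \<Longrightarrow> C \<in> T \<Longrightarrow> (\<Sum>x\<in>S. \<mu> T x * g C x) \<le> 1/3"
  shows "real (2 ^ card Q) \<le> real (card S ^ 576) * (4 ^ (card Q div 16) * (5/4) ^ card Q)"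
proof -
  define t :: nat where "t = 576"
  define m where "m = card Q"
  define D where "D xs = {C\<in>Q. sum_list (map (g C) xs) \<le> real t / 2}" for xs
  define Ball where "Ball xs = {T. T \<subseteq> Q \<and> card ((T - D xs) \<union> (D xs - T)) \<le> m div 16}" for xs
  have finL: "finite (Lt S t)" unfolding Lt_def using finS by (simp add: finite_lists_length_eq)
  have cover: "\<exists>xs\<in>Lt S t. T \<in> Ball xs" if TQ: "T \<subseteq> Q" for T
  proof -
    let ?W = "\<lambda>xs. prod_list (map (\<mu> T) xs)"
    let ?P = "\<lambda>C xs. C \<in> (T - D xs) \<union> (D xs - T)"
    have mu1: "(\<Sum>x\<in>S. \<mu> T x) = 1" and mu0: "\<And>x. x \<in> S \<Longrightarrow> \<mu> T x \<ge> 0" using mu[OF TQ] by auto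
    have W1: "(\<Sum>xs\<in>Lt S t. ?W xs) = 1"
      using moments[OF finS mu1 mu0, of "\<lambda>x. 0"] by simp
    have Wnn: "?W xs \<ge> 0" if "xs \<in> Lt S t" for xs
    proof -
    have S: "set xs \<subseteq> S" using that unfolding Lt_def by simp
    show ?thesis by (rule prod_list_nonneg) (use S mu0 in auto)
  qed
    have percl: "(\<Sum>xs\<in>Lt S t. ?W xs * (if ?P C xs then 1 else 0)) \<le> 36 / real t" if CQ: "C \<in> Q" for C
    proof (rule misclass_bound[OF finS mu1 mu0])
      show "\<And>x. x \<in> S \<Longrightarrow> 0 \<le> g C x \<and> g C x \<le> 1" using g CQ by blast
      show "t > 0" unfolding t_def by simp
      fix xs assume xs: "xs \<in> Lt S t" and P: "?P C xs"
      define a where "a = (\<Sum>x\<in>S. \<mu> T x * g C x)"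
      show "real t / 6 \<le> \<bar>sum_list (map (g C) xs) - real t * (\<Sum>x\<in>S. \<mu> T x * g C x)\<bar>"
      proof (cases "C \<in> T")
        case True
        with P have "sum_list (map (g C) xs) > real t / 2" unfolding D_def using CQ by auto
        moreover have "a \<le> 1/3" unfolding a_def using lo[OF TQ True] .
        ultimately show ?thesis unfolding a_def[symmetric] by (simp add: t_def)
      next
        case False
        with P have "sum_list (map (g C) xs) \<le> real t / 2" unfolding D_def using CQ by auto
        moreover have "a \<ge> 2/3" unfolding a_def using hi[OF TQ CQ False] .
        ultimately show ?thesis unfolding a_def[symmetric] by (simp add: t_def)
      qed
    qed
    have cardeq: "real (card ((T - D xs) \<union> (D xs - T))) = (\<Sum>C\<in>Q. if ?P C xs then 1 else 0)" for xs
    proof -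
      have "(T - D xs) \<union> (D xs - T) \<subseteq> Q" using TQ unfolding D_def by auto
      hence "(T - D xs) \<union> (D xs - T) = {C\<in>Q. ?P C xs}" by auto
      thus ?thesis using finQ by (simp add: sum.inter_filter[symmetric])
    qed
    have "(\<Sum>xs\<in>Lt S t. ?W xs * real (card ((T - D xs) \<union> (D xs - T))))
        = (\<Sum>C\<in>Q. \<Sum>xs\<in>Lt S t. ?W xs * (if ?P C xs then 1 else 0))"
      unfolding cardeq sum_distrib_left by (rule sum.swap)
    also have "\<dots> \<le> (\<Sum>C\<in>Q. 36 / real t)" by (rule sum_mono) (rule percl)
    also have "\<dots> = real m / 16" unfolding m_def t_def by simp
    finally have avg: "(\<Sum>xs\<in>Lt S t. ?W xs * real (card ((T - D xs) \<union> (D xs - T)))) \<le> real m / 16" .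
    have "\<exists>xs\<in>Lt S t. real (card ((T - D xs) \<union> (D xs - T))) \<le> real m / 16"
      by (rule exists_below_avg[OF finL W1 Wnn avg])
    then obtain xs where xs: "xs \<in> Lt S t" "real (card ((T - D xs) \<union> (D xs - T))) \<le> real m / 16"
      by blast
    hence "card ((T - D xs) \<union> (D xs - T)) \<le> m div 16" by linarith
    thus ?thesis using xs TQ unfolding Ball_def by blast
  qed
  have ballcard: "card (Ball xs) \<le> card {E. E \<subseteq> Q \<and> card E \<le> m div 16}" for xs
  proof -
    let ?f = "\<lambda>T. (T - D xs) \<union> (D xs - T)"
    have "inj_on ?f (Ball xs)" by (rule inj_onI) blast
    moreover have "?f ` Ball xs \<subseteq> {E. E \<subseteq> Q \<and> card E \<le> m div 16}"
      unfolding Ball_def D_def by auto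
    moreover have "finite {E. E \<subseteq> Q \<and> card E \<le> m div 16}" using finQ by simp
    ultimately show ?thesis by (rule card_inj_on_le)
  qed
  have "Pow Q \<subseteq> (\<Union>xs\<in>Lt S t. Ball xs)" using cover by blast
  hence "card (Pow Q) \<le> card (\<Union>xs\<in>Lt S t. Ball xs)"
    by (intro card_mono) (auto simp: finL Ball_def finQ intro: finite_subset[of _ "Pow Q"])
  also have "\<dots> \<le> (\<Sum>xs\<in>Lt S t. card (Ball xs))" by (rule card_UN_le[OF finL])
  also have "\<dots> \<le> (\<Sum>xs\<in>Lt S t. card {E. E \<subseteq> Q \<and> card E \<le> m div 16})" by (intro sum_mono ballcard)
  also have "\<dots> = card S ^ t * card {E. E \<subseteq> Q \<and> card E \<le> m div 16}"
    using card_lists_length_eq[OF finS, of t] unfolding Lt_def by (simp add: conj_commute)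
  finally have c1: "card (Pow Q) \<le> card S ^ t * card {E. E \<subseteq> Q \<and> card E \<le> m div 16}" .
  have "2 ^ m = card (Pow Q)" using card_Pow[of Q] finQ unfolding m_def by simp
  with c1 have "real (2 ^ m) \<le> real (card S ^ t * card {E. E \<subseteq> Q \<and> card E \<le> m div 16})"
    by (simp only: of_nat_le_iff)
  hence "real (2 ^ m) \<le> real (card S ^ t) * real (card {E. E \<subseteq> Q \<and> card E \<le> m div 16})"
    by (simp only: of_nat_mult)
  also have "\<dots> \<le> real (card S ^ t) * (4 ^ (m div 16) * (5/4) ^ m)"
    using card_small_subsets[OF finQ, of "m div 16"] unfolding m_def by (intro mult_left_mono) auto
  finally show ?thesis unfolding m_def t_def .
qed



definition AllC :: "nat \<Rightarrow> nat \<Rightarrow> nat list set set \<Rightarrow> nat \<Rightarrow> constr set" where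
  "AllC q k \<Gamma> n = {C. valid_constr q k \<Gamma> n C}"

lemma AllC_sub: "AllC q k \<Gamma> n \<subseteq> \<Gamma> \<times> Lt {..<n} k \<times> Lt {..<q} k"
  unfolding AllC_def valid_constr_def Lt_def by (auto split: prod.splits)

lemma finite_AllC: "finite \<Gamma> \<Longrightarrow> finite (AllC q k \<Gamma> n)"
  by (rule finite_subset[OF AllC_sub]) (auto simp: Lt_def finite_lists_length_eq)

lemma card_AllC: "finite \<Gamma> \<Longrightarrow> card (AllC q k \<Gamma> n) \<le> card \<Gamma> * n ^ k * q ^ k"
proof -
  assume fin: "finite \<Gamma>"
  have "card (AllC q k \<Gamma> n) \<le> card (\<Gamma> \<times> Lt {..<n} k \<times> Lt {..<q} k)"
    by (rule card_mono[OF _ AllC_sub]) (auto simp: Lt_def finite_lists_length_eq fin)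
  also have "\<dots> = card \<Gamma> * n ^ k * q ^ k"
    using card_lists_length_eq[of "{..<n}" k] card_lists_length_eq[of "{..<q}" k]
    by (simp add: card_cartesian_product Lt_def conj_commute)
  finally show ?thesis .
qed

lemma instance_sub: "is_instance q k \<Gamma> n I \<Longrightarrow> I \<subseteq> AllC q k \<Gamma> n"
  unfolding is_instance_def AllC_def by auto

lemma Sat_mono: "J \<subseteq> I \<Longrightarrow> Sat q n I \<subseteq> Sat q n J"
  unfolding Sat_def by auto

lemma Sat_insert: "Sat q n (insert C J) = Sat q n J \<inter> Sat q n {C}"
  unfolding Sat_def by auto

lemma nonred_sub:
  "finite J \<Longrightarrow> \<exists>J'\<subseteq>J. non_redundant q n J' \<and> Sat q n J' = Sat q n J"
proof (induction "card J" arbitrary: J rule: less_induct)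
  case (less J)
  show ?case
  proof (cases "non_redundant q n J")
    case True then show ?thesis by blast
  next
    case False
    then obtain C where C: "C \<in> J" "Sat q n (J - {C}) = Sat q n J"
      unfolding non_redundant_def by blast
    have "card (J - {C}) < card J" using C(1) less.prems by (meson card_Diff1_less)
    from less.hyps[OF this] obtain J' where "J' \<subseteq> J - {C}" "non_redundant q n J'"
      "Sat q n J' = Sat q n (J - {C})" using less.prems by auto
    then show ?thesis using C by auto
  qed
qed

lemma NRD_set_finite:
  assumes "finite \<Gamma>"
  shows "finite {card I | I. is_instance q k \<Gamma> n I \<and> non_redundant q n I}"
proof -
  have "{card I | I. is_instance q k \<Gamma> n I \<and> non_redundant q n I} \<subseteq> {..card (AllC q k \<Gamma> n)}"
  proof
    fix x assume "x \<in> {card I | I. is_instance q k \<Gamma> n I \<and> non_redundant q n I}"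
    then obtain I where "x = card I" "is_instance q k \<Gamma> n I" by blast
    thus "x \<in> {..card (AllC q k \<Gamma> n)}" using card_mono[OF finite_AllC[OF assms] instance_sub] by auto
  qed
  thus ?thesis by (rule finite_subset) simp
qed

lemma NRD_ge:
  assumes "finite \<Gamma>" "is_instance q k \<Gamma> n I" "non_redundant q n I"
  shows "card I \<le> NRD q k \<Gamma> n"
  unfolding NRD_def using assms by (intro Max_ge[OF NRD_set_finite]) auto

lemma NRD_attained:
  assumes "finite \<Gamma>"
  shows "\<exists>I. is_instance q k \<Gamma> n I \<and> non_redundant q n I \<and> card I = NRD q k \<Gamma> n"
proof -
  have "is_instance q k \<Gamma> n {} \<and> non_redundant q n {}"
    unfolding is_instance_def non_redundant_def by simp
  hence "{card I | I. is_instance q k \<Gamma> n I \<and> non_redundant q n I} \<noteq> {}" by blast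
  from Max_in[OF NRD_set_finite[OF assms] this] show ?thesis unfolding NRD_def by auto
qed

lemma count_small_sets:
  assumes "finite A"
  shows "card {J. J \<subseteq> A \<and> card J \<le> r} \<le> (card A + 1) ^ r"
proof -
  let ?B = "insert None (Some ` A)"
  let ?f = "\<lambda>xs. {x. Some x \<in> set xs}"
  have "{J. J \<subseteq> A \<and> card J \<le> r} \<subseteq> ?f ` Lt ?B r"
  proof
    fix J assume J: "J \<in> {J. J \<subseteq> A \<and> card J \<le> r}"
    hence "finite J" using assms finite_subset by blast
    then obtain ys where ys: "set ys = J" "distinct ys" using finite_distinct_list by blast
    have len: "length ys = card J" using ys distinct_card by fastforce
    let ?xs = "map Some ys @ replicate (r - card J) None"
    have "?xs \<in> Lt ?B r" using J ys len unfolding Lt_def by auto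
    moreover have "?f ?xs = J" using ys by auto
    ultimately show "J \<in> ?f ` Lt ?B r" by blast
  qed
  hence "card {J. J \<subseteq> A \<and> card J \<le> r} \<le> card (?f ` Lt ?B r)"
    by (intro card_mono) (auto simp: Lt_def assms finite_lists_length_eq)
  also have "\<dots> \<le> card (Lt ?B r)" by (rule card_image_le) (auto simp: Lt_def assms finite_lists_length_eq)
  also have "\<dots> = card ?B ^ r" using card_lists_length_eq[of ?B r] assms by (simp add: Lt_def conj_commute)
  also have "card ?B = card A + 1" using assms by (simp add: card_image)
  finally show ?thesis .
qed



definition shiftC :: "nat \<Rightarrow> (nat \<Rightarrow> nat) \<Rightarrow> constr \<Rightarrow> constr" where
  "shiftC q e C = (case C of (R, idx, sh) \<Rightarrow> (R, idx, map (\<lambda>(i,l). (l + e i) mod q) (zip idx sh)))"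

lemma sat_cong:
  assumes "\<forall>i\<in>set idx. x!i mod q = y!i mod q"
  shows "sat_constr q (R,idx,sh) x = sat_constr q (R,idx,sh) y"
proof -
  have "map (\<lambda>(i, l). (x ! i + l) mod q) (zip idx sh) = map (\<lambda>(i, l). (y ! i + l) mod q) (zip idx sh)"
  proof (rule map_cong[OF refl])
    fix p
    assume pz: "p \<in> set (zip idx sh)"
    obtain i l where p0: "p = (i,l)" by (cases p) simp
    have "i \<in> set idx" using pz p0 by (simp add: set_zip_leftD)
    note p = p0 this
    hence "x!i mod q = y!i mod q" using assms by auto
    hence "(x ! i + l) mod q = (y ! i + l) mod q" by (rule mod_add_cong) simp
    thus "(case p of (i, l) \<Rightarrow> (x ! i + l) mod q) = (case p of (i, l) \<Rightarrow> (y ! i + l) mod q)"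
      using p by simp
  qed
  thus ?thesis unfolding sat_constr_def by (simp only: prod.case)
qed

lemma mod_helper:
  fixes a b c y q :: nat
  assumes "y mod q = (a + c) mod q"
  shows "(a + (b + c) mod q) mod q = (y + b) mod q"
proof -
  have "(a + (b + c) mod q) mod q = (a + c + b) mod q" by (simp add: mod_add_right_eq add.commute add.left_commute)
  also have "\<dots> = ((a + c) mod q + b) mod q" by (simp only: mod_add_left_eq)
  also have "\<dots> = (a + c + b) mod q" by (simp only: mod_add_left_eq)
  also have "\<dots> = (y + b) mod q" by (rule mod_add_cong) (simp_all add: assms)
  finally show ?thesis .
qed

lemma sat_shift:
  assumes "length idx = length sh" "\<forall>i\<in>set idx. y!i mod q = (x!i + e i) mod q"
  shows "sat_constr q (shiftC q e (R,idx,sh)) x = sat_constr q (R,idx,sh) y"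
proof -
  have "map (\<lambda>(i, l). (x ! i + l) mod q) (zip idx (map (\<lambda>(i,l). (l + e i) mod q) (zip idx sh)))
      = map (\<lambda>(i, l). (y ! i + l) mod q) (zip idx sh)"
  proof (rule nth_equalityI)
    show "length (map (\<lambda>(i, l). (x ! i + l) mod q) (zip idx (map (\<lambda>(i,l). (l + e i) mod q) (zip idx sh))))
      = length (map (\<lambda>(i, l). (y ! i + l) mod q) (zip idx sh))" using assms(1) by simp
    fix j assume "j < length (map (\<lambda>(i, l). (x ! i + l) mod q) (zip idx (map (\<lambda>(i,l). (l + e i) mod q) (zip idx sh))))"
    hence j: "j < length idx" "j < length sh" using assms(1) by auto
    have "y ! (idx!j) mod q = (x!(idx!j) + e (idx!j)) mod q" using assms(2) j by auto
    hence "(x ! (idx!j) + (sh!j + e (idx!j)) mod q) mod q = (y ! (idx!j) + sh!j) mod q"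
      by (rule mod_helper)
    thus "map (\<lambda>(i, l). (x ! i + l) mod q) (zip idx (map (\<lambda>(i,l). (l + e i) mod q) (zip idx sh))) ! j
      = map (\<lambda>(i, l). (y ! i + l) mod q) (zip idx sh) ! j" using j by simp
  qed
  thus ?thesis unfolding sat_constr_def shiftC_def by (simp only: prod.case)
qed

lemma valid_shift:
  assumes "valid_constr q k \<Gamma> n C" "q > 0"
  shows "valid_constr q k \<Gamma> n (shiftC q e C)"
proof -
  obtain R idx sh where C: "C = (R, idx, sh)" by (rule prod_cases3)
  have v: "R \<in> \<Gamma>" "length idx = k" "length sh = k" "\<forall>i\<in>set idx. i < n" "\<forall>l\<in>set sh. l < q"
    "\<forall>j<k. \<forall>j'<k. idx ! j = idx ! j' \<longrightarrow> sh ! j = sh ! j'"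
    using assms(1) unfolding C valid_constr_def prod.case by blast+
  define sh' where "sh' = map (\<lambda>(i,l). (l + e i) mod q) (zip idx sh)"
  have len: "length sh' = k" unfolding sh'_def using v(2,3) by simp
  have nth: "sh' ! j = (sh ! j + e (idx ! j)) mod q" if "j < k" for j
    unfolding sh'_def using that v(2,3) by simp
  have lt: "\<forall>l\<in>set sh'. l < q"
  proof
    fix l assume "l \<in> set sh'"
    then obtain j where j: "j < length sh'" "sh' ! j = l" by (auto simp: in_set_conv_nth)
    hence "j < k" "l = sh' ! j" using len by simp_all
    thus "l < q" using nth assms(2) by simp
  qed
  have cons: "\<forall>j<k. \<forall>j'<k. idx ! j = idx ! j' \<longrightarrow> sh' ! j = sh' ! j'"
  proof (intro allI impI)
    fix j j' assume jj: "j < k" "j' < k" "idx ! j = idx ! j'"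
    hence "sh ! j = sh ! j'" using v(6) by blast
    thus "sh' ! j = sh' ! j'" using nth[OF jj(1)] nth[OF jj(2)] jj(3) by simp
  qed
  have "valid_constr q k \<Gamma> n (R, idx, sh')"
    unfolding valid_constr_def prod.case using v len lt cons by blast
  thus ?thesis unfolding C shiftC_def sh'_def by simp
qed

lemma chain:
  assumes q: "q > 0" and vC: "valid_constr q k \<Gamma> n C"
    and a: "a \<in> assignments q n" and b: "length b = n" and sb: "sat_constr q C b"
    and H: "\<And>D. valid_constr q k \<Gamma> n D \<Longrightarrow> fst D = fst C \<Longrightarrow> fst (snd D) = fst (snd C) \<Longrightarrow> D \<noteq> C
              \<Longrightarrow> sat_constr q D a \<Longrightarrow> sat_constr q D b"
  shows "sat_constr q C a"
proof (rule ccontr)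
  assume na: "\<not> sat_constr q C a"
  obtain R idx sh where C: "C = (R, idx, sh)" by (rule prod_cases3)
  have vv: "length idx = k" "length sh = k" "\<forall>i\<in>set idx. i < n"
    using vC unfolding C valid_constr_def prod.case by blast+
  have idxn: "\<forall>i\<in>set idx. i < n" and lens: "length idx = length sh"
    using vv by simp_all
  have alen: "length a = n" and altq: "\<forall>i<n. a!i < q" using a unfolding assignments_def by auto
  define d where "d i = b!i + (q - a!i)" for i
  define v where "v m = map (\<lambda>i. a!i + m * d i) [0..<n]" for m :: nat
  have vnth: "v m ! i = a!i + m * d i" if "i < n" for m i using that unfolding v_def by simp
  have ad: "a!i + d i = b!i + q" if "i < n" for i
  proof -
    have "a!i < q" using altq that by auto
    thus ?thesis unfolding d_def by simp
  qed
  have all: "sat_constr q C (v (Suc m))" for m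
  proof (induction m)
    case 0
    have "sat_constr q C (v 1) = sat_constr q C b" unfolding C
    proof (rule sat_cong, intro ballI)
      fix i assume "i \<in> set idx"
      hence "i < n" using idxn by auto
      thus "v 1 ! i mod q = b ! i mod q" using vnth ad by simp
    qed
    thus ?case using sb by simp
  next
    case (Suc m)
    define D where "D = shiftC q (\<lambda>i. Suc m * d i) C"
    have sDa: "sat_constr q D a = sat_constr q C (v (Suc m))" unfolding D_def C
    proof (rule sat_shift[OF lens], intro ballI)
      fix i assume "i \<in> set idx"
      hence "i < n" using idxn by auto
      thus "v (Suc m) ! i mod q = (a ! i + Suc m * d i) mod q" using vnth by simp
    qed
    have "D \<noteq> C"
    proof
      assume "D = C"
      hence "sat_constr q C a" using sDa Suc by simp
      thus False using na by simp
    qed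
    moreover have "valid_constr q k \<Gamma> n D" unfolding D_def by (rule valid_shift[OF vC q])
    moreover have "fst D = fst C" "fst (snd D) = fst (snd C)" unfolding D_def C shiftC_def by auto
    ultimately have "sat_constr q D b" using H sDa Suc by blast
    moreover have "sat_constr q D b = sat_constr q C (v (Suc (Suc m)))" unfolding D_def C
    proof (rule sat_shift[OF lens], intro ballI)
      fix i assume "i \<in> set idx"
      hence i: "i < n" using idxn by auto
      have "v (Suc (Suc m)) ! i = (a!i + d i) + Suc m * d i" using vnth[OF i] by simp
      also have "\<dots> = (b ! i + Suc m * d i) + q" using ad[OF i] by simp
      finally show "v (Suc (Suc m)) ! i mod q = (b ! i + Suc m * d i) mod q" by simp
    qed
    ultimately show ?case by simp
  qed
  have "sat_constr q C (v q)" using all[of "q - 1"] q by simp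
  moreover have "sat_constr q C (v q) = sat_constr q C a" unfolding C
  proof (rule sat_cong, intro ballI)
    fix i assume "i \<in> set idx"
    hence "i < n" using idxn by auto
    thus "v q ! i mod q = a ! i mod q" using vnth by simp
  qed
  ultimately show False using na by simp
qed



lemma Sat_union_insert: "Sat q n (J \<union> {C}) = Sat q n J \<inter> Sat q n {C}"
  unfolding Sat_def by auto

lemma pow_bound:
  fixes n G Q k :: nat
  assumes "n \<ge> G * Q + 2"
  shows "G * n ^ k * Q + 1 \<le> n ^ (k + 1)"
proof -
  have "G * n ^ k * Q + 1 \<le> G * Q * n ^ k + n ^ k"
    using assms by (simp add: algebra_simps Suc_le_eq)
  also have "\<dots> = (G * Q + 1) * n ^ k" by (simp add: algebra_simps)
  also have "\<dots> \<le> n * n ^ k" using assms by (intro mult_right_mono) auto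
  finally show ?thesis by simp
qed

lemma part_a:
  assumes q: "q \<ge> 2" and finG: "finite \<Gamma>"
  shows "\<exists>c N. \<forall>n\<ge>N. \<exists>S s0 \<delta> out.
            det_stream_alg q k \<Gamma> n (c * real (NRD q k \<Gamma> n) * log 2 (real n)) S s0 \<delta> out"
proof (intro exI[of _ "real (k + 1)"] exI[of _ "card \<Gamma> * q ^ k + 2"] allI impI)
  fix n assume nN: "n \<ge> card \<Gamma> * q ^ k + 2"
  define A where "A = AllC q k \<Gamma> n"
  define Sg where "Sg = Sat q n ` Pow A"
  define r where "r = NRD q k \<Gamma> n"
  have finA: "finite A" unfolding A_def by (rule finite_AllC[OF finG])
  have finSg: "finite Sg" unfolding Sg_def using finA by simp
  obtain h where h: "bij_betw h Sg {0..<card Sg}" using ex_bij_betw_finite_nat[OF finSg] by blast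
  have hinj: "inj_on h Sg" using h bij_betw_imp_inj_on by blast
  define S where "S = {0..<card Sg}"
  define s0 where "s0 = h (Sat q n {})"
  define \<delta> where "\<delta> s C = h (inv_into Sg h s \<inter> Sat q n {C})" for s C
  define out where "out s = (inv_into Sg h s \<noteq> {})" for s
  have hS: "X \<in> Sg \<Longrightarrow> h X \<in> S" for X using h unfolding S_def bij_betw_def by auto
  have Sg_ins: "Sat q n J \<inter> Sat q n {C} \<in> Sg" if "J \<subseteq> A" "C \<in> A" for J C
    using that unfolding Sg_def by (auto simp: Sat_union_insert[symmetric] intro!: imageI)
  have run: "fold (\<lambda>c s. \<delta> s c) xs (h (Sat q n J)) = h (Sat q n (J \<union> set xs))"
    if "J \<subseteq> A" "set xs \<subseteq> A" for xs J
    using that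
  proof (induction xs arbitrary: J)
    case Nil then show ?case by simp
  next
    case (Cons x xs)
    have "J \<in> Pow A" using Cons.prems by simp
    hence "Sat q n J \<in> Sg" unfolding Sg_def by (rule imageI)
    hence e1: "inv_into Sg h (h (Sat q n J)) = Sat q n J" by (rule inv_into_f_f[OF hinj])
    have "\<delta> (h (Sat q n J)) x = h (Sat q n J \<inter> Sat q n {x})" unfolding \<delta>_def e1 ..
    also have "\<dots> = h (Sat q n (J \<union> {x}))" unfolding Sat_union_insert ..
    finally have "\<delta> (h (Sat q n J)) x = h (Sat q n (J \<union> {x}))" .
    moreover have "J \<union> {x} \<subseteq> A" "set xs \<subseteq> A" using Cons.prems by auto
    ultimately show ?case using Cons.IH[of "J \<union> {x}"] by simp
  qed
  have cardSg: "card Sg \<le> (card A + 1) ^ r"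
  proof -
    have "Sg \<subseteq> Sat q n ` {J. J \<subseteq> A \<and> card J \<le> r}"
    proof
      fix X assume "X \<in> Sg"
      then obtain J where J: "J \<subseteq> A" "X = Sat q n J" unfolding Sg_def by auto
      have "finite J" by (rule finite_subset[OF J(1) finA])
      from nonred_sub[OF this] obtain J' where J': "J' \<subseteq> J" "non_redundant q n J'" "Sat q n J' = Sat q n J"
        by blast
      have J'A: "J' \<subseteq> A" using J'(1) J(1) by (rule order_trans)
      have fJ': "finite J'" by (rule finite_subset[OF J'A finA])
      have "\<forall>C\<in>J'. valid_constr q k \<Gamma> n C" using J'A unfolding A_def AllC_def by blast
      hence "is_instance q k \<Gamma> n J'" unfolding is_instance_def using fJ' by simp
      hence "card J' \<le> r" unfolding r_def using NRD_ge[OF finG _ J'(2)] by blast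
      thus "X \<in> Sat q n ` {J. J \<subseteq> A \<and> card J \<le> r}" using J J' by auto
    qed
    hence "card Sg \<le> card (Sat q n ` {J. J \<subseteq> A \<and> card J \<le> r})"
      by (intro card_mono) (auto simp: finA)
    also have "\<dots> \<le> card {J. J \<subseteq> A \<and> card J \<le> r}" by (rule card_image_le) (simp add: finA)
    also have "\<dots> \<le> (card A + 1) ^ r" by (rule count_small_sets[OF finA])
    finally show ?thesis .
  qed
  have "card A + 1 \<le> n ^ (k + 1)"
  proof -
    have "card A \<le> card \<Gamma> * n ^ k * q ^ k" unfolding A_def by (rule card_AllC[OF finG])
    thus ?thesis using pow_bound[where k=k, OF nN] by linarith
  qed
  hence "card Sg \<le> (n ^ (k + 1)) ^ r" using cardSg by (meson order_trans power_mono zero_le)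
  hence c1: "card Sg \<le> n ^ ((k + 1) * r)" by (simp only: power_mult)
  have c2: "card S \<le> n ^ ((k + 1) * r)" unfolding S_def using c1 by simp
  have cS: "real (card S) \<le> real n ^ ((k + 1) * r)" using of_nat_le_iff[THEN iffD2, OF c2] by (simp only: of_nat_power)
  have npos: "real n > 0" using nN by simp
  have "2 powr (real (k + 1) * real r * log 2 (real n)) = (2 powr (log 2 (real n))) powr (real ((k + 1) * r))"
    by (simp add: powr_powr algebra_simps)
  also have "\<dots> = real n ^ ((k + 1) * r)"
  proof -
    have l2: "2 powr (log 2 (real n)) = real n" using npos by simp
    show ?thesis unfolding l2 by (rule powr_realpow[OF npos])
  qed
  finally have b0: "2 powr (real (k + 1) * real r * log 2 (real n)) = real n ^ ((k + 1) * r)" .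
  have b: "real (card S) \<le> 2 powr (real (k + 1) * real r * log 2 (real n))" unfolding b0 by (rule cS)
  show "\<exists>S s0 \<delta> out. det_stream_alg q k \<Gamma> n (real (k + 1) * real (NRD q k \<Gamma> n) * log 2 (real n)) S s0 \<delta> out"
  proof (intro exI)
    show "det_stream_alg q k \<Gamma> n (real (k + 1) * real (NRD q k \<Gamma> n) * log 2 (real n)) S s0 \<delta> out"
      unfolding det_stream_alg_def
    proof (intro conjI allI ballI impI)
      show "finite S" unfolding S_def by simp
      show "real (card S) \<le> 2 powr (real (k + 1) * real (NRD q k \<Gamma> n) * log 2 (real n))"
        using b unfolding r_def .
      show "s0 \<in> S" unfolding s0_def Sg_def by (rule hS[unfolded Sg_def], rule imageI) simp
      fix s C assume s: "s \<in> S" and C: "valid_constr q k \<Gamma> n C"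
      have "h ` Sg = S" using h unfolding bij_betw_def S_def by simp
      hence "inv_into Sg h s \<in> Sg" using s by (intro inv_into_into) simp
      then obtain J where "J \<subseteq> A" "inv_into Sg h s = Sat q n J" unfolding Sg_def by auto
      moreover have "C \<in> A" using C unfolding A_def AllC_def by simp
      ultimately show "\<delta> s C \<in> S" unfolding \<delta>_def using Sg_ins hS by auto
    next
      fix xs assume xs: "valid_stream q k \<Gamma> n xs"
      hence "set xs \<subseteq> A" unfolding valid_stream_def A_def AllC_def by auto
      hence "det_run s0 \<delta> xs = h (Sat q n (set xs))"
        unfolding det_run_def s0_def using run[of "{}" xs] by simp
      moreover have "Sat q n (set xs) \<in> Sg" unfolding Sg_def by (rule imageI) (use \<open>set xs \<subseteq> A\<close> in simp)
      ultimately show "out (det_run s0 \<delta> xs) = (Sat q n (set xs) \<noteq> {})"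
        unfolding out_def using hinj by (simp add: inv_into_f_f)
    qed
  qed
qed



lemma rr_cons: "rand_run p \<delta> (x#xs) = rand_run (bind_pmf p (\<lambda>s. \<delta> s x)) \<delta> xs"
  by (simp add: rand_run_def)

lemma rr_append: "rand_run p \<delta> (xs @ ys) = rand_run (rand_run p \<delta> xs) \<delta> ys"
  by (simp add: rand_run_def)

lemma rr_bind: "rand_run p \<delta> ys = bind_pmf p (\<lambda>s. rand_run (return_pmf s) \<delta> ys)"
proof (induction ys arbitrary: p)
  case Nil
  have "(\<lambda>s. rand_run (return_pmf s) \<delta> []) = return_pmf" by (simp add: rand_run_def fun_eq_iff)
  thus ?case by (simp add: rand_run_def bind_return_pmf')
next
  case (Cons y ys)
  have "rand_run p \<delta> (y # ys) = rand_run (bind_pmf p (\<lambda>s. \<delta> s y)) \<delta> ys" by (rule rr_cons)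
  also have "\<dots> = bind_pmf (bind_pmf p (\<lambda>s. \<delta> s y)) (\<lambda>s. rand_run (return_pmf s) \<delta> ys)"
    by (rule Cons.IH)
  also have "\<dots> = bind_pmf p (\<lambda>s. bind_pmf (\<delta> s y) (\<lambda>s. rand_run (return_pmf s) \<delta> ys))"
    by (rule bind_assoc_pmf)
  also have "\<dots> = bind_pmf p (\<lambda>s. rand_run (return_pmf s) \<delta> (y # ys))"
  proof (rule bind_pmf_cong[OF refl])
    fix s
    have "rand_run (return_pmf s) \<delta> (y # ys) = rand_run (bind_pmf (return_pmf s) (\<lambda>s. \<delta> s y)) \<delta> ys"
      by (rule rr_cons)
    also have "\<dots> = rand_run (\<delta> s y) \<delta> ys" by (simp only: bind_return_pmf)
    also have "\<dots> = bind_pmf (\<delta> s y) (\<lambda>s. rand_run (return_pmf s) \<delta> ys)" by (rule Cons.IH)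
    finally show "bind_pmf (\<delta> s y) (\<lambda>s. rand_run (return_pmf s) \<delta> ys) = rand_run (return_pmf s) \<delta> (y # ys)"
      by (rule sym)
  qed
  finally show ?case .
qed

lemma rr_set:
  assumes "set_pmf p \<subseteq> S" "\<forall>s\<in>S. \<forall>C\<in>set xs. set_pmf (\<delta> s C) \<subseteq> S"
  shows "set_pmf (rand_run p \<delta> xs) \<subseteq> S"
  using assms
proof (induction xs arbitrary: p)
  case Nil then show ?case by (simp add: rand_run_def)
next
  case (Cons x xs)
  have "set_pmf (bind_pmf p (\<lambda>s. \<delta> s x)) \<subseteq> S" using Cons.prems by auto
  then show ?case using Cons.IH[of "bind_pmf p (\<lambda>s. \<delta> s x)"] Cons.prems by (simp add: rr_cons)
qed

lemma prob_split:
  assumes "finite S" "set_pmf (rand_run s0 \<delta> xs) \<subseteq> S"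
  shows "pmf (bind_pmf (rand_run s0 \<delta> (xs @ ys)) out) v
       = (\<Sum>s\<in>S. pmf (rand_run s0 \<delta> xs) s * pmf (bind_pmf (rand_run (return_pmf s) \<delta> ys) out) v)"
proof -
  have "bind_pmf (rand_run s0 \<delta> (xs @ ys)) out
      = bind_pmf (rand_run s0 \<delta> xs) (\<lambda>s. bind_pmf (rand_run (return_pmf s) \<delta> ys) out)"
    unfolding rr_append by (subst rr_bind[of "rand_run s0 \<delta> xs"]) (rule bind_assoc_pmf)
  hence "pmf (bind_pmf (rand_run s0 \<delta> (xs @ ys)) out) v
      = (\<integral>s. pmf (bind_pmf (rand_run (return_pmf s) \<delta> ys) out) v \<partial>measure_pmf (rand_run s0 \<delta> xs))"
    by (simp add: pmf_bind)
  also have "\<dots> = (\<Sum>s\<in>S. pmf (rand_run s0 \<delta> xs) s *\<^sub>R pmf (bind_pmf (rand_run (return_pmf s) \<delta> ys) out) v)"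
    by (rule integral_measure_pmf[OF assms(1)]) (use assms(2) in auto)
  finally show ?thesis by simp
qed

lemma lb_log:
  fixes m N :: nat
  assumes "real (2^m) \<le> real (N^576) * (4^(m div 16) * (5/4)^m)" "N \<ge> 1"
  shows "13/24 * real m \<le> 576 * log 2 (real N)"
proof -
  have Npos: "real N > 0" using assms(2) by simp
  have "log 2 (real (2^m)) \<le> log 2 (real (N^576) * (4^(m div 16) * (5/4)^m))"
    using assms(1) Npos by (subst log_le_cancel_iff) auto
  moreover have "log 2 (real (2^m)) = real m" by (simp add: log_nat_power)
  moreover have "log 2 (real (N^576) * (4^(m div 16) * (5/4)^m))
      = 576 * log 2 (real N) + real (m div 16) * log 2 4 + real m * log 2 (5/4)"
    using Npos by (simp add: log_mult log_nat_power)
  moreover have "log 2 (4::real) = 2"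
  proof -
    have "log 2 (4::real) = log 2 (2 ^ 2)" by simp
    also have "\<dots> = real 2 * log 2 2" by (rule log_nat_power) simp
    finally show ?thesis by simp
  qed
  moreover have "log 2 (5/4::real) \<le> 1/3"
  proof -
    have "3 * log 2 (5/4::real) = log 2 ((5/4)^3)" by (simp add: log_nat_power)
    also have "\<dots> \<le> log 2 2" by (subst log_le_cancel_iff) (auto simp: power3_eq_cube)
    also have "\<dots> = 1" by simp
    finally show ?thesis by simp
  qed
  moreover have "real (m div 16) * 2 \<le> real m / 8" by linarith
  ultimately have h: "real m \<le> 576 * log 2 (real N) + real (m div 16) * 2 + real m * log 2 (5/4)"
    and h5: "log 2 (5/4::real) \<le> 1/3" and h8: "real (m div 16) * 2 \<le> real m / 8" by simp_all
  have "real m * log 2 (5/4) \<le> real m * (1/3)" using h5 by (rule mult_left_mono) simp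
  hence "real m \<le> 576 * log 2 (real N) + real m / 8 + real m / 3" using h h8 by linarith
  thus ?thesis by simp
qed



definition lst :: "'a set \<Rightarrow> 'a list" where
  "lst X = (SOME xs. set xs = X \<and> distinct xs)"

lemma lst: "finite X \<Longrightarrow> set (lst X) = X \<and> distinct (lst X)"
  unfolding lst_def by (rule someI_ex) (rule finite_distinct_list)

lemma core_b:
  assumes q: "q \<ge> 2" and finG: "finite \<Gamma>"
    and alg: "rand_stream_alg q k \<Gamma> n b S s0 \<delta> out"
  shows "13/24 * real (NRD q k \<Gamma> n) \<le> 576 * real (q^k) * b"
proof -
  have finS: "finite S" and cardS: "real (card S) \<le> 2 powr b" and s0S: "set_pmf s0 \<subseteq> S"
    and clos: "\<And>s C. s \<in> S \<Longrightarrow> valid_constr q k \<Gamma> n C \<Longrightarrow> set_pmf (\<delta> s C) \<subseteq> S"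
    and corr: "\<And>xs. valid_stream q k \<Gamma> n xs \<Longrightarrow>
        measure_pmf.prob (bind_pmf (rand_run s0 \<delta> xs) out) {Sat q n (set xs) \<noteq> {}} \<ge> 2/3"
    using alg unfolding rand_stream_alg_def by blast+
  define All where "All = AllC q k \<Gamma> n"
  have finAll: "finite All" unfolding All_def by (rule finite_AllC[OF finG])
  obtain I where I: "is_instance q k \<Gamma> n I" "non_redundant q n I" "card I = NRD q k \<Gamma> n"
    using NRD_attained[OF finG] by blast
  have IA: "I \<subseteq> All" unfolding All_def by (rule instance_sub[OF I(1)])
  have finI: "finite I" using I(1) unfolding is_instance_def by simp
  define cls :: "constr \<Rightarrow> nat list set \<times> nat list" where "cls C = (fst C, fst (snd C))" for C
  define K where "K = cls ` I"
  define rep where "rep c = (SOME C. C \<in> I \<and> cls C = c)" for c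
  define Q where "Q = rep ` K"
  have rep: "rep c \<in> I \<and> cls (rep c) = c" if "c \<in> K" for c
    unfolding rep_def by (rule someI_ex) (use that K_def in auto)
  have QI: "Q \<subseteq> I" unfolding Q_def using rep by auto
  have finQ: "finite Q" using QI finI finite_subset by blast
  have injrep: "inj_on rep K"
  proof (rule inj_onI)
    fix x y assume xy: "x \<in> K" "y \<in> K" "rep x = rep y"
    have "x = cls (rep x)" using rep[OF xy(1)] by simp
    also have "\<dots> = cls (rep y)" using xy(3) by simp
    also have "\<dots> = y" using rep[OF xy(2)] by simp
    finally show "x = y" .
  qed
  have cardQ: "card Q = card K" unfolding Q_def by (rule card_image[OF injrep])
  have Quniq: "C = D" if "C \<in> Q" "D \<in> Q" "cls C = cls D" for C D
    using that rep unfolding Q_def by auto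
  have cardI: "card I \<le> card Q * q ^ k"
  proof -
    define fib where "fib c = (\<lambda>sh. (fst c, snd c, sh)) ` Lt {..<q} k" for c :: "nat list set \<times> nat list"
    have "I \<subseteq> (\<Union>c\<in>K. fib c)"
    proof
      fix C assume C: "C \<in> I"
      obtain R idx sh where Ceq: "C = (R, idx, sh)" by (rule prod_cases3)
      have "valid_constr q k \<Gamma> n C" using I(1) C unfolding is_instance_def by auto
      hence "length sh = k" "\<forall>l\<in>set sh. l < q" unfolding Ceq valid_constr_def prod.case by blast+
      hence "sh \<in> Lt {..<q} k" unfolding Lt_def by auto
      hence "C \<in> fib (cls C)" unfolding fib_def cls_def Ceq by auto
      thus "C \<in> (\<Union>c\<in>K. fib c)" using C unfolding K_def by auto
    qed
    hence "card I \<le> card (\<Union>c\<in>K. fib c)"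
      by (intro card_mono) (auto simp: K_def finI fib_def Lt_def finite_lists_length_eq)
    also have "\<dots> \<le> (\<Sum>c\<in>K. card (fib c))" by (rule card_UN_le) (simp add: K_def finI)
    also have "\<dots> \<le> (\<Sum>c\<in>K. q ^ k)"
    proof (rule sum_mono)
      fix c
      have "card (fib c) \<le> card (Lt {..<q} k)" unfolding fib_def by (rule card_image_le) (simp add: Lt_def finite_lists_length_eq)
      also have "\<dots> = q ^ k" using card_lists_length_eq[of "{..<q}" k] by (simp add: Lt_def conj_commute)
      finally show "card (fib c) \<le> q ^ k" .
    qed
    also have "\<dots> = card Q * q ^ k" using cardQ by simp
    finally show ?thesis .
  qed
  have exa: "\<exists>a. a \<in> Sat q n (I - {C}) \<and> \<not> sat_constr q C a" if "C \<in> Q" for C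
  proof -
    have CI: "C \<in> I" using that QI by auto
    have "Sat q n (I - {C}) \<noteq> Sat q n I" using I(2) CI unfolding non_redundant_def by auto
    moreover have "Sat q n I \<subseteq> Sat q n (I - {C})" by (rule Sat_mono) auto
    ultimately obtain a where a: "a \<in> Sat q n (I - {C})" "a \<notin> Sat q n I" by blast
    hence "\<not> sat_constr q C a" unfolding Sat_def by auto
    thus ?thesis using a by blast
  qed
  define a where "a C = (SOME a. a \<in> Sat q n (I - {C}) \<and> \<not> sat_constr q C a)" for C
  have a: "a C \<in> Sat q n (I - {C}) \<and> \<not> sat_constr q C (a C)" if "C \<in> Q" for C
    unfolding a_def by (rule someI_ex) (rule exa[OF that])
  define Aset where "Aset T = (I - Q) \<union> T" for T
  define Bset where "Bset C = {D \<in> All. sat_constr q D (a C)} - I" for C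
  have key: "(Sat q n (Aset T \<union> Bset C) \<noteq> {}) = (C \<notin> T)" if T: "T \<subseteq> Q" and C: "C \<in> Q" for T C
  proof
    assume "C \<notin> T"
    have "a C \<in> Sat q n (Aset T \<union> Bset C)"
      using a[OF C] \<open>C \<notin> T\<close> T QI C unfolding Aset_def Bset_def Sat_def by auto
    thus "Sat q n (Aset T \<union> Bset C) \<noteq> {}" by blast
  next
    assume "Sat q n (Aset T \<union> Bset C) \<noteq> {}"
    then obtain x where x: "x \<in> Sat q n (Aset T \<union> Bset C)" by blast
    show "C \<notin> T"
    proof
      assume CT: "C \<in> T"
      have vC: "valid_constr q k \<Gamma> n C" using C QI IA unfolding All_def AllC_def by auto
      have aC: "a C \<in> assignments q n" using a[OF C] unfolding Sat_def by auto
      have xlen: "length x = n" using x unfolding Sat_def assignments_def by auto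
      have sx: "sat_constr q C x" using x CT unfolding Sat_def Aset_def by auto
      have "sat_constr q C (a C)"
      proof (rule chain[OF _ vC aC xlen sx])
        show "q > 0" using q by simp
        fix D assume vD: "valid_constr q k \<Gamma> n D" and f1: "fst D = fst C" and f2: "fst (snd D) = fst (snd C)"
          and DC: "D \<noteq> C" and sD: "sat_constr q D (a C)"
        have "D \<in> Aset T \<union> Bset C"
        proof (cases "D \<in> I")
          case True
          have "D \<notin> Q" using Quniq[OF C, of D] f1 f2 DC unfolding cls_def by auto
          thus ?thesis using True unfolding Aset_def by auto
        next
          case False
          thus ?thesis using vD sD unfolding Bset_def All_def AllC_def by auto
        qed
        thus "sat_constr q D x" using x unfolding Sat_def by auto
      qed
      thus False using a[OF C] by simp
    qed
  qed
  define xsT where "xsT T = lst (Aset T)" for T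
  define ysC where "ysC C = lst (Bset C)" for C
  have finA: "finite (Aset T)" if "T \<subseteq> Q" for T using that finI finQ finite_subset unfolding Aset_def by blast
  have finB: "finite (Bset C)" for C using finAll unfolding Bset_def by auto
  have setx: "set (xsT T) = Aset T" "distinct (xsT T)" if "T \<subseteq> Q" for T
    using lst[OF finA[OF that]] unfolding xsT_def by auto
  have sety: "set (ysC C) = Bset C" "distinct (ysC C)" for C
    using lst[OF finB] unfolding ysC_def by auto
  have validA: "valid_constr q k \<Gamma> n D" if "T \<subseteq> Q" "D \<in> set (xsT T)" for T D
    using that setx IA QI unfolding Aset_def All_def AllC_def by auto
  have vs: "valid_stream q k \<Gamma> n (xsT T @ ysC C)" if T: "T \<subseteq> Q" for T C
  proof -
    have "set (xsT T) \<inter> set (ysC C) = {}" using setx[OF T] sety QI T unfolding Aset_def Bset_def by auto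
    moreover have "\<forall>D\<in>set (ysC C). valid_constr q k \<Gamma> n D" using sety unfolding Bset_def All_def AllC_def by auto
    ultimately show ?thesis unfolding valid_stream_def using setx[OF T] sety validA[OF T] by auto
  qed
  define \<mu> where "\<mu> T s = pmf (rand_run s0 \<delta> (xsT T)) s" for T s
  define g where "g C s = pmf (bind_pmf (rand_run (return_pmf s) \<delta> (ysC C)) out) True" for C s
  have suppT: "set_pmf (rand_run s0 \<delta> (xsT T)) \<subseteq> S" if "T \<subseteq> Q" for T
    by (rule rr_set[OF s0S]) (use clos validA[OF that] in blast)
  have total: "pmf (bind_pmf (rand_run s0 \<delta> (xsT T @ ysC C)) out) True = (\<Sum>s\<in>S. \<mu> T s * g C s)"
    if "T \<subseteq> Q" for T C
    unfolding \<mu>_def g_def by (rule prob_split[OF finS suppT[OF that]])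
  have pTF: "pmf p True = 1 - pmf p False" for p :: "bool pmf"
  proof -
    have "(\<Sum>x\<in>UNIV. pmf p x) = 1" by (rule sum_pmf_eq_1) auto
    thus ?thesis by (simp add: UNIV_bool)
  qed
  have big: "real (2 ^ card Q) \<le> real (card S ^ 576) * (4 ^ (card Q div 16) * (5/4) ^ card Q)"
  proof (rule comm_lb[OF finS finQ])
    fix T assume T: "T \<subseteq> Q"
    show "(\<Sum>x\<in>S. \<mu> T x) = 1 \<and> (\<forall>x\<in>S. 0 \<le> \<mu> T x)"
      unfolding \<mu>_def using sum_pmf_eq_1[OF finS suppT[OF T]] by simp
  next
    fix C x show "0 \<le> g C x \<and> g C x \<le> 1" unfolding g_def by (simp add: pmf_le_1)
  next
    fix T C assume T: "T \<subseteq> Q" and C: "C \<in> Q" and CT: "C \<notin> T"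
    have st: "set (xsT T @ ysC C) = Aset T \<union> Bset C" using setx[OF T] sety by simp
    have c: "measure_pmf.prob (bind_pmf (rand_run s0 \<delta> (xsT T @ ysC C)) out) {Sat q n (set (xsT T @ ysC C)) \<noteq> {}} \<ge> 2/3"
      by (rule corr[OF vs[OF T]])
    have e: "{Sat q n (set (xsT T @ ysC C)) \<noteq> {}} = {True}" using key[OF T C] CT st by simp
    have "measure_pmf.prob (bind_pmf (rand_run s0 \<delta> (xsT T @ ysC C)) out) {True} \<ge> 2/3"
      using c unfolding e .
    thus "2/3 \<le> (\<Sum>x\<in>S. \<mu> T x * g C x)" using total[OF T] by (simp add: measure_pmf_single)
  next
    fix T C assume T: "T \<subseteq> Q" and CT: "C \<in> T"
    have C: "C \<in> Q" using T CT by auto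
    have st: "set (xsT T @ ysC C) = Aset T \<union> Bset C" using setx[OF T] sety by simp
    have c: "measure_pmf.prob (bind_pmf (rand_run s0 \<delta> (xsT T @ ysC C)) out) {Sat q n (set (xsT T @ ysC C)) \<noteq> {}} \<ge> 2/3"
      by (rule corr[OF vs[OF T]])
    have e: "{Sat q n (set (xsT T @ ysC C)) \<noteq> {}} = {False}" using key[OF T C] CT st by simp
    have "measure_pmf.prob (bind_pmf (rand_run s0 \<delta> (xsT T @ ysC C)) out) {False} \<ge> 2/3"
      using c unfolding e .
    hence "pmf (bind_pmf (rand_run s0 \<delta> (xsT T @ ysC C)) out) False \<ge> 2/3" by (simp add: measure_pmf_single)
    thus "(\<Sum>x\<in>S. \<mu> T x * g C x) \<le> 1/3" using total[OF T, of C] pTF by simp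
  qed
  have S1: "card S \<ge> 1"
  proof -
    have "set_pmf s0 \<noteq> {}" by (rule set_pmf_not_empty)
    hence "S \<noteq> {}" using s0S by auto
    thus ?thesis using finS by (simp add: Suc_le_eq card_gt_0_iff)
  qed
  have l1: "13/24 * real (card Q) \<le> 576 * log 2 (real (card S))" by (rule lb_log[OF big S1])
  have "log 2 (real (card S)) \<le> log 2 (2 powr b)" using cardS S1 by (subst log_le_cancel_iff) auto
  hence l2: "log 2 (real (card S)) \<le> b" by simp
  have "13/24 * real (NRD q k \<Gamma> n) \<le> 13/24 * (real (card Q) * real (q ^ k))"
  proof -
    have "real (card I) \<le> real (card Q * q ^ k)" using cardI by (simp only: of_nat_le_iff)
    hence "real (NRD q k \<Gamma> n) \<le> real (card Q) * real (q ^ k)" using I(3) by (simp only: of_nat_mult)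
    thus ?thesis by (rule mult_left_mono) simp
  qed
  also have "\<dots> = (13/24 * real (card Q)) * real (q ^ k)" by simp
  also have "\<dots> \<le> (576 * b) * real (q ^ k)" using l1 l2 by (intro mult_right_mono) auto
  finally show ?thesis by (simp add: algebra_simps)
qed



lemma NRD_pos:
  assumes q: "q \<ge> 2" and finG: "finite \<Gamma>" and nt: "nontrivial_lang q k \<Gamma>" and n: "n \<ge> k"
  shows "NRD q k \<Gamma> n \<ge> 1"
proof -
  obtain R0 where R0: "R0 \<in> \<Gamma>" "R0 \<subset> full_tuples q k" using nt unfolding nontrivial_lang_def by blast
  then obtain t where t: "t \<in> full_tuples q k" "t \<notin> R0" by blast
  have tl: "length t = k" and tq: "\<forall>x\<in>set t. x < q" using t unfolding full_tuples_def by auto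
  define C :: constr where "C = (R0, [0..<k], replicate k 0)"
  define av where "av = t @ replicate (n - k) 0"
  have av: "av \<in> assignments q n" unfolding av_def assignments_def using tl tq n q by auto
  have "map (\<lambda>(i, l). (av ! i + l) mod q) (zip [0..<k] (replicate k 0)) = t"
  proof (rule nth_equalityI)
    show "length (map (\<lambda>(i, l). (av ! i + l) mod q) (zip [0..<k] (replicate k 0))) = length t" using tl by simp
    fix j assume "j < length (map (\<lambda>(i, l). (av ! i + l) mod q) (zip [0..<k] (replicate k 0)))"
    hence j: "j < k" by simp
    have "t ! j < q" using tq j tl by auto
    thus "map (\<lambda>(i, l). (av ! i + l) mod q) (zip [0..<k] (replicate k 0)) ! j = t ! j"
      using j tl unfolding av_def by (simp add: nth_append)
  qed
  hence ns: "\<not> sat_constr q C av" unfolding sat_constr_def C_def using t by simp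
  have vC: "valid_constr q k \<Gamma> n C" unfolding valid_constr_def C_def using R0 n q by auto
  have inst: "is_instance q k \<Gamma> n {C}" unfolding is_instance_def using vC by simp
  have "av \<in> Sat q n ({C} - {C})" using av unfolding Sat_def by simp
  moreover have "av \<notin> Sat q n {C}" using ns unfolding Sat_def by simp
  ultimately have "non_redundant q n {C}" unfolding non_redundant_def by auto
  from NRD_ge[OF finG inst this] show ?thesis by simp
qed

theorem theorem1p1:
  fixes q k :: nat and \<Gamma> :: "nat list set set"
  assumes "q \<ge> 2" and "k \<ge> 1"
    and "finite \<Gamma>"
    and "\<forall>R\<in>\<Gamma>. is_relation q k R"
    and "nontrivial_lang q k \<Gamma>"
  shows "(\<exists>c N. \<forall>n\<ge>N. \<exists>S s0 \<delta> out.
            det_stream_alg q k \<Gamma> n (c * real (NRD q k \<Gamma> n) * log 2 (real n)) S s0 \<delta> out)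
       \<and> (\<forall>s :: nat \<Rightarrow> real. s \<in> o(\<lambda>n. real (NRD q k \<Gamma> n)) \<longrightarrow>
            \<not> (\<forall>\<^sub>F n in at_top. \<exists>S s0 \<delta> out. rand_stream_alg q k \<Gamma> n (s n) S s0 \<delta> out))"
proof (intro conjI allI impI notI)
  show "\<exists>c N. \<forall>n\<ge>N. \<exists>S s0 \<delta> out.
            det_stream_alg q k \<Gamma> n (c * real (NRD q k \<Gamma> n) * log 2 (real n)) S s0 \<delta> out"
    by (rule part_a[OF assms(1) assms(3)])
next
  fix s :: "nat \<Rightarrow> real"
  assume so: "s \<in> o(\<lambda>n. real (NRD q k \<Gamma> n))"
    and ev: "\<forall>\<^sub>F n in at_top. \<exists>S s0 \<delta> out. rand_stream_alg q k \<Gamma> n (s n) S s0 \<delta> out"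
  define c1 :: real where "c1 = 13 / (24 * 576 * real (q ^ k))"
  have qk: "real (q ^ k) > 0" using assms(1) by simp
  have c1: "c1 > 0" unfolding c1_def using qk by simp
  have e1: "\<forall>\<^sub>F n in at_top. norm (s n) \<le> (c1/2) * norm (real (NRD q k \<Gamma> n))"
    using landau_o.smallD[OF so, of "c1/2"] c1 by simp
  have e2: "\<forall>\<^sub>F n in at_top. n \<ge> k" by (rule eventually_ge_at_top)
  have "\<forall>\<^sub>F n in at_top. (\<exists>S s0 \<delta> out. rand_stream_alg q k \<Gamma> n (s n) S s0 \<delta> out)
      \<and> norm (s n) \<le> (c1/2) * norm (real (NRD q k \<Gamma> n)) \<and> n \<ge> k"
    using ev e1 e2 by eventually_elim auto
  then obtain n where n: "\<exists>S s0 \<delta> out. rand_stream_alg q k \<Gamma> n (s n) S s0 \<delta> out"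
    "norm (s n) \<le> (c1/2) * norm (real (NRD q k \<Gamma> n))" "n \<ge> k"
    unfolding eventually_at_top_linorder by blast
  then obtain S s0 \<delta> out where alg: "rand_stream_alg q k \<Gamma> n (s n) S s0 \<delta> out" by blast
  have cb: "13/24 * real (NRD q k \<Gamma> n) \<le> 576 * real (q^k) * s n"
    by (rule core_b[OF assms(1) assms(3) alg])
  have N1: "real (NRD q k \<Gamma> n) \<ge> 1" using NRD_pos[OF assms(1) assms(3) assms(5) n(3)] by simp
  have "c1 * real (NRD q k \<Gamma> n) \<le> s n"
  proof -
    have "c1 * real (NRD q k \<Gamma> n) = (13/24 * real (NRD q k \<Gamma> n)) / (576 * real (q^k))"
      unfolding c1_def by (simp add: field_simps)
    also have "\<dots> \<le> (576 * real (q^k) * s n) / (576 * real (q^k))"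
      using cb qk by (intro divide_right_mono) auto
    also have "\<dots> = s n" using qk by simp
    finally show ?thesis .
  qed
  moreover have "s n \<le> (c1/2) * real (NRD q k \<Gamma> n)" using n(2) by simp
  ultimately have "c1 * real (NRD q k \<Gamma> n) \<le> (c1 * real (NRD q k \<Gamma> n)) / 2" by simp
  moreover have "c1 * real (NRD q k \<Gamma> n) > 0" using c1 N1 by simp
  ultimately show False by linarith
qed

end
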